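(* If $\widehat{\mathcal T}_\bullet$ is an admissible hierarchical mesh, then ${\tt refine}(\widehat{\mathcal T}_\bullet)$ coincides with the set of all admissible hierarchical meshes $\widehat{\mathcal T}_\circ$ that are finer than $\widehat{\mathcal T}_\bullet$ (i.e. $\widehat\Omega^k_\bullet\subseteq\widehat\Omega^k_\circ$ for all $k$). In particular, the set of admissible meshes equals ${\tt refine}(\widehat{\mathcal T}^0)$.
   Context: Parameter domain $\widehat\Omega=(0,1)^d$, $d\ge2$; degrees $p_1,\dots,p_d\ge1$. For each $i$, $\widehat{\mathcal K}^0_i$ is a $p_i$-open knot vector in $[0,1]$ (first $p_i+1$ knots $0$, last $p_i+1$ knots $1$, interior multiplicities $\le p_i$); $\widehat{\mathcal K}^{k+1}_i$ arises from $\widehat{\mathcal K}^k_i$ by inserting each nondegenerate span's midpoint once. $\widehat{\mathcal B}^k$: tensor-product B-splines of degree $(p_1,\dots,p_d)$ for $\widehat{\mathcal K}^k$; $\widehat{\mathcal T}^k$: closed cells of level $k$. A hierarchical mesh is given by closed sets $[0,1]^d=\widehat\Omega^0_\bullet\supseteq\widehat\Omega^1_\bullet\supseteq\cdots$, each $\widehat\Omega^k_\bullet$ ($k\ge1$) a union of cells of $\widehat{\mathcal T}^{k-1}$, eventually empty; mesh $\widehat{\mathcal T}_\bullet=\bigcup_k\{\widehat T\in\widehat{\mathcal T}^k:\widehat T\subseteq\widehat\Omega^k_\bullet,\widehat T\not\subseteq\widehat\Omega^{k+1}_\bullet\}$, ${\rm level}(\widehat T)=k$; hierarchical basis $\widehat{\mathcal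 H}_\bullet=\bigcup_k\{\widehat\beta\in\widehat{\mathcal B}^k:{\rm supp}\,\widehat\beta\subseteq\widehat\Omega^k_\bullet,{\rm supp}\,\widehat\beta\not\subseteq\widehat\Omega^{k+1}_\bullet\}$. Neighbors $\mathcal N_\bullet(\widehat T)=\{\widehat T'\in\widehat{\mathcal T}_\bullet:\exists\widehat\beta\in\widehat{\mathcal H}_\bullet,\widehat T,\widehat T'\subseteq{\rm supp}\,\widehat\beta\}$; bad neighbors $\mathcal N^{\rm bad}_\bullet(\widehat T)=\{\widehat T'\in\mathcal N_\bullet(\widehat T):{\rm level}(\widehat T')={\rm level}(\widehat T)-1\}$. Admissible: $|{\rm level}(\widehat T)-{\rm level}(\widehat T')|\le1$ whenever $\widehat T'\in\mathcal N_\bullet(\widehat T)$. ${\tt refine}(\widehat{\mathcal T}_\bullet,\widehat{\mathcal M})$ for $\widehat{\mathcal M}\subseteq\widehat{\mathcal T}_\bullet$: $\widehat{\mathcal M}^{(0)}=\widehat{\mathcal M}$, $\widehat{\mathcal M}^{(i+1)}=\widehat{\mathcal M}^{(i)}\cup\bigcup_{\widehat T\in\widehat{\mathcal M}^{(i)}}\mathcal N^{\rm bad}_\bullet(\widehat T)$ until stationary; each $\widehat T$ in the final set is added to $\widehat\Omega^{{\rm level}(\widehat T)+1}$ (dyadic bisection), giving the new mesh. ${\tt refine}(\widehat{\mathcal T}_\bullet)$ is the set of meshes obtained from $\widehat{\mathcal T}_\bullet$ by finitely many (possibly zero) such refinement steps. *)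

theory Defs
  imports "HOL-Analysis.Analysis"
begin

text \<open>Knot vectors are lists of reals; a B-spline of a given level is identified by its
  multi-index j (one index per direction), its support being the box spanned by the
  knots t_{j_i} and t_{j_i+p_i+1} in each direction.  A hierarchical mesh is
  represented by its sequence of nested domains Omega^k.\<close>

definition open_knots :: "nat \<Rightarrow> real list \<Rightarrow> bool" where
  "open_knots q K \<longleftrightarrow> sorted K \<and> 2 * (q + 1) \<le> length K
     \<and> (\<forall>i\<le>q. K ! i = 0 \<and> K ! (length K - 1 - i) = 1)
     \<and> (\<forall>i. q < i \<and> i < length K - 1 - q \<longrightarrow> 0 < K ! i \<and> K ! i < 1)
     \<and> (\<forall>t. 0 < t \<and> t < 1 \<longrightarrow> count_list K t \<le> q)"

definition refine_knots :: "real list \<Rightarrow> real list" where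
  "refine_knots K = sort (K @ map (\<lambda>i. (K ! i + K ! Suc i) / 2)
       (filter (\<lambda>i. K ! i < K ! Suc i) [0..<length K - 1]))"

definition knots :: "('d \<Rightarrow> real list) \<Rightarrow> nat \<Rightarrow> 'd \<Rightarrow> real list" where
  "knots K0 k i = (refine_knots ^^ k) (K0 i)"

definition cells :: "('d::finite \<Rightarrow> real list) \<Rightarrow> nat \<Rightarrow> (real^'d) set set" where
  "cells K0 k = {cbox (\<chi> i. knots K0 k i ! m i) (\<chi> i. knots K0 k i ! Suc (m i)) | m.
      \<forall>i. Suc (m i) < length (knots K0 k i) \<and> knots K0 k i ! m i < knots K0 k i ! Suc (m i)}"

definition bspl :: "('d \<Rightarrow> nat) \<Rightarrow> ('d \<Rightarrow> real list) \<Rightarrow> nat \<Rightarrow> ('d \<Rightarrow> nat) set" where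
  "bspl p K0 k = {j. \<forall>i. j i + p i + 1 < length (knots K0 k i)}"

definition supp_b :: "('d::finite \<Rightarrow> nat) \<Rightarrow> ('d \<Rightarrow> real list) \<Rightarrow> nat \<Rightarrow> ('d \<Rightarrow> nat) \<Rightarrow> (real^'d) set" where
  "supp_b p K0 k j = cbox (\<chi> i. knots K0 k i ! j i) (\<chi> i. knots K0 k i ! (j i + p i + 1))"

definition unit_cube :: "(real^'d::finite) set" where
  "unit_cube = cbox (\<chi> i. 0) (\<chi> i. 1)"

definition hier_mesh :: "('d::finite \<Rightarrow> real list) \<Rightarrow> (nat \<Rightarrow> (real^'d) set) \<Rightarrow> bool" where
  "hier_mesh K0 \<Omega> \<longleftrightarrow> \<Omega> 0 = unit_cube \<and> (\<forall>k. \<Omega> (Suc k) \<subseteq> \<Omega> k)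
     \<and> (\<forall>k. \<exists>S \<subseteq> cells K0 k. \<Omega> (Suc k) = \<Union>S) \<and> (\<exists>N. \<forall>k\<ge>N. \<Omega> k = {})"

definition mesh :: "('d::finite \<Rightarrow> real list) \<Rightarrow> (nat \<Rightarrow> (real^'d) set) \<Rightarrow> (nat \<times> (real^'d) set) set" where
  "mesh K0 \<Omega> = {(k, T). T \<in> cells K0 k \<and> T \<subseteq> \<Omega> k \<and> \<not> T \<subseteq> \<Omega> (Suc k)}"

definition hbasis :: "('d::finite \<Rightarrow> nat) \<Rightarrow> ('d \<Rightarrow> real list) \<Rightarrow> (nat \<Rightarrow> (real^'d) set) \<Rightarrow> (nat \<times> ('d \<Rightarrow> nat)) set" where
  "hbasis p K0 \<Omega> = {(k, j). j \<in> bspl p K0 k \<and> supp_b p K0 k j \<subseteq> \<Omega> k \<and> \<not> supp_b p K0 k j \<subseteq> \<Omega> (Suc k)}"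

definition neighbors :: "('d::finite \<Rightarrow> nat) \<Rightarrow> ('d \<Rightarrow> real list) \<Rightarrow> (nat \<Rightarrow> (real^'d) set)
    \<Rightarrow> nat \<times> (real^'d) set \<Rightarrow> (nat \<times> (real^'d) set) set" where
  "neighbors p K0 \<Omega> kT = {kT' \<in> mesh K0 \<Omega>. \<exists>(l, j) \<in> hbasis p K0 \<Omega>.
       snd kT \<subseteq> supp_b p K0 l j \<and> snd kT' \<subseteq> supp_b p K0 l j}"

definition bad_neighbors :: "('d::finite \<Rightarrow> nat) \<Rightarrow> ('d \<Rightarrow> real list) \<Rightarrow> (nat \<Rightarrow> (real^'d) set)
    \<Rightarrow> nat \<times> (real^'d) set \<Rightarrow> (nat \<times> (real^'d) set) set" where
  "bad_neighbors p K0 \<Omega> kT = {kT' \<in> neighbors p K0 \<Omega> kT. fst kT' + 1 = fst kT}"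

definition admissible :: "('d::finite \<Rightarrow> nat) \<Rightarrow> ('d \<Rightarrow> real list) \<Rightarrow> (nat \<Rightarrow> (real^'d) set) \<Rightarrow> bool" where
  "admissible p K0 \<Omega> \<longleftrightarrow> hier_mesh K0 \<Omega> \<and>
     (\<forall>kT \<in> mesh K0 \<Omega>. \<forall>kT' \<in> neighbors p K0 \<Omega> kT. fst kT \<le> fst kT' + 1 \<and> fst kT' \<le> fst kT + 1)"

primrec marked_iter :: "('d::finite \<Rightarrow> nat) \<Rightarrow> ('d \<Rightarrow> real list) \<Rightarrow> (nat \<Rightarrow> (real^'d) set)
    \<Rightarrow> (nat \<times> (real^'d) set) set \<Rightarrow> nat \<Rightarrow> (nat \<times> (real^'d) set) set" where
  "marked_iter p K0 \<Omega> M 0 = M"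
| "marked_iter p K0 \<Omega> M (Suc i) =
     marked_iter p K0 \<Omega> M i \<union> \<Union> (bad_neighbors p K0 \<Omega> ` marked_iter p K0 \<Omega> M i)"

definition marked_closure :: "('d::finite \<Rightarrow> nat) \<Rightarrow> ('d \<Rightarrow> real list) \<Rightarrow> (nat \<Rightarrow> (real^'d) set)
    \<Rightarrow> (nat \<times> (real^'d) set) set \<Rightarrow> (nat \<times> (real^'d) set) set" where
  "marked_closure p K0 \<Omega> M = (\<Union>i. marked_iter p K0 \<Omega> M i)"

definition refine_step :: "('d::finite \<Rightarrow> nat) \<Rightarrow> ('d \<Rightarrow> real list) \<Rightarrow> (nat \<Rightarrow> (real^'d) set)
    \<Rightarrow> (nat \<times> (real^'d) set) set \<Rightarrow> nat \<Rightarrow> (real^'d) set" where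
  "refine_step p K0 \<Omega> M k = (case k of 0 \<Rightarrow> \<Omega> 0
     | Suc l \<Rightarrow> \<Omega> (Suc l) \<union> \<Union> {T. (l, T) \<in> marked_closure p K0 \<Omega> M})"

definition refine_rel :: "('d::finite \<Rightarrow> nat) \<Rightarrow> ('d \<Rightarrow> real list) \<Rightarrow> (nat \<Rightarrow> (real^'d) set)
    \<Rightarrow> (nat \<Rightarrow> (real^'d) set) \<Rightarrow> bool" where
  "refine_rel p K0 \<Omega> \<Omega>' \<longleftrightarrow> (\<exists>M \<subseteq> mesh K0 \<Omega>. \<Omega>' = refine_step p K0 \<Omega> M)"

definition refinements :: "('d::finite \<Rightarrow> nat) \<Rightarrow> ('d \<Rightarrow> real list) \<Rightarrow> (nat \<Rightarrow> (real^'d) set)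
    \<Rightarrow> (nat \<Rightarrow> (real^'d) set) set" where
  "refinements p K0 \<Omega> = {\<Omega>'. (refine_rel p K0)\<^sup>*\<^sup>* \<Omega> \<Omega>'}"

definition initial_mesh :: "nat \<Rightarrow> (real^'d::finite) set" where
  "initial_mesh k = (if k = 0 then unit_cube else {})"

end

theory Submission
  imports Defs
begin


definition kinv :: "nat \<Rightarrow> real list \<Rightarrow> bool" where
  "kinv q t \<longleftrightarrow> sorted t \<and> set t \<subseteq> {0..1} \<and> 0 \<in> set t \<and> q + 1 \<le> length (filter (\<lambda>x. x = 1) t)"

lemma open_kinv:
  assumes "open_knots q K" shows "kinv q K"
proof -
  let ?n = "length K"
  have s: "sorted K" and len: "2*(q+1) \<le> ?n"
    and e: "\<And>i. i \<le> q \<Longrightarrow> K ! i = 0 \<and> K ! (?n - 1 - i) = 1"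
    and m: "\<And>i. q < i \<Longrightarrow> i < ?n - 1 - q \<Longrightarrow> 0 < K ! i \<and> K ! i < 1"
    using assms unfolding open_knots_def by auto
  have "set K \<subseteq> {0..1}"
  proof
    fix x assume "x \<in> set K"
    then obtain i where i: "i < ?n" "x = K ! i" by (auto simp: in_set_conv_nth)
    show "x \<in> {0..1}"
    proof (cases "i \<le> q")
      case True then show ?thesis using e[of i] i by simp
    next
      case False
      show ?thesis
      proof (cases "i < ?n - 1 - q")
        case True then show ?thesis using m[of i] False i by auto
      next
        case F2: False
        have "?n - 1 - (?n - 1 - i) = i" using i by auto
        then show ?thesis using e[of "?n - 1 - i"] F2 i by auto
      qed
    qed
  qed
  moreover have "0 \<in> set K"
  proof -
    have "0 < ?n" using len by (cases K) auto
    then have "K ! 0 \<in> set K" by simp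
    then show ?thesis using e[of 0] by simp
  qed
  moreover have "q + 1 \<le> length (filter (\<lambda>x. x = 1) K)"
  proof -
    have "(\<lambda>i. ?n - 1 - i) ` {..q} \<subseteq> {i. i < ?n \<and> K ! i = 1}" using e len by auto
    moreover have "inj_on (\<lambda>i. ?n - 1 - i) {..q}" using len by (auto simp: inj_on_def)
    moreover have "finite {i. i < ?n \<and> K ! i = 1}" by simp
    ultimately have "card ((\<lambda>i. ?n - 1 - i) ` {..q}) \<le> card {i. i < ?n \<and> K ! i = 1}"
      by (intro card_mono)
    then have "card {..q} \<le> card {i. i < ?n \<and> K ! i = 1}"
      using card_image[OF \<open>inj_on (\<lambda>i. ?n - 1 - i) {..q}\<close>] by simp
    then show ?thesis by (simp add: length_filter_conv_card)
  qed
  ultimately show ?thesis using s by (simp add: kinv_def)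
qed

definition mids :: "real list \<Rightarrow> real list" where
  "mids K = map (\<lambda>i. (K ! i + K ! Suc i) / 2) (filter (\<lambda>i. K ! i < K ! Suc i) [0..<length K - 1])"

lemma refine_knots_mids: "refine_knots K = sort (K @ mids K)"
  by (simp add: refine_knots_def mids_def)

lemma mset_refine: "mset (refine_knots K) = mset K + mset (mids K)"
  by (simp add: refine_knots_mids)

lemma set_refine: "set (refine_knots K) = set K \<union> set (mids K)"
  by (simp add: refine_knots_mids)

lemma mset_sub_refine: "mset K \<subseteq># mset (refine_knots K)"
  by (simp add: mset_refine)

lemma kinv_refine:
  assumes "kinv q K" shows "kinv q (refine_knots K)"
proof -
  have mi: "set (mids K) \<subseteq> {0..1}"
  proof
    fix x assume "x \<in> set (mids K)"
    then obtain i where i: "i < length K - 1" and xe: "x = (K ! i + K ! Suc i) / 2" by (auto simp: mids_def)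
    have "K ! i \<in> set K" "K ! Suc i \<in> set K" using i by auto
    then have "K ! i \<in> {0..1}" "K ! Suc i \<in> {0..1}" using assms unfolding kinv_def by blast+
    then show "x \<in> {0..1}" using \<open>x = _\<close> by auto
  qed
  have "length (filter (\<lambda>x. x = 1) K) \<le> length (filter (\<lambda>x. x = 1) (refine_knots K))"
    by (simp add: refine_knots_mids filter_sort)
  then show ?thesis using assms mi by (auto simp: kinv_def set_refine refine_knots_mids)
qed




definition cell1 :: "real list \<Rightarrow> real \<Rightarrow> real \<Rightarrow> bool" where
  "cell1 T c d \<longleftrightarrow> c \<in> set T \<and> d \<in> set T \<and> c < d \<and> (\<forall>y\<in>set T. y \<le> c \<or> d \<le> y)"

lemma cell1_nth:
  assumes "sorted T" "Suc m < length T" "T!m < T!Suc m"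
  shows "cell1 T (T!m) (T!Suc m)"
proof -
  have "\<forall>y\<in>set T. y \<le> T!m \<or> T!Suc m \<le> y"
  proof
    fix y assume "y \<in> set T"
    then obtain i where i: "i < length T" "y = T!i" by (auto simp: in_set_conv_nth)
    show "y \<le> T!m \<or> T!Suc m \<le> y"
    proof (cases "i \<le> m")
      case True then show ?thesis using assms i by (auto intro: sorted_nth_mono)
    next
      case False then have "Suc m \<le> i" by simp
      then show ?thesis using assms i by (auto intro: sorted_nth_mono)
    qed
  qed
  then show ?thesis using assms by (auto simp: cell1_def)
qed

lemma cell1_ex_nth:
  assumes s: "sorted T" and c: "cell1 T c d"
  shows "\<exists>m. Suc m < length T \<and> T!m = c \<and> T!Suc m = d"
proof -
  let ?I = "{i. i < length T \<and> T!i = c}"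
  have ne: "?I \<noteq> {}" using c by (auto simp: cell1_def in_set_conv_nth)
  have fin: "finite ?I" by simp
  have mI: "Max ?I \<in> ?I" by (rule Max_in[OF fin ne])
  define m where "m = Max ?I"
  obtain i0 where i0: "i0 < length T" "T!i0 = d" using c by (auto simp: cell1_def in_set_conv_nth)
  have "m < i0"
  proof (rule ccontr)
    assume "\<not> m < i0" then have "i0 \<le> m" by simp
    moreover have "m < length T" using mI m_def by simp
    ultimately have "T!i0 \<le> T!m" using s by (intro sorted_nth_mono)
    then show False using i0 mI m_def c by (auto simp: cell1_def)
  qed
  then have sm: "Suc m < length T" using i0 by simp
  have "T!m \<le> T!Suc m" using s sm by (auto intro: sorted_nth_mono)
  moreover have "T!Suc m \<noteq> c"
  proof
    assume "T!Suc m = c"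
    then have "Suc m \<in> ?I" using sm by simp
    then have "Suc m \<le> m" unfolding m_def by (rule Max_ge[OF fin])
    then show False by simp
  qed
  ultimately have gt: "c < T!Suc m" using mI m_def by auto
  have "T!Suc m \<le> d" using s \<open>m < i0\<close> i0 by (metis Suc_leI sorted_nth_mono)
  moreover have "T!Suc m \<le> c \<or> d \<le> T!Suc m" using c sm by (auto simp: cell1_def)
  ultimately have "T!Suc m = d" using gt by auto
  then show ?thesis using sm mI m_def by auto
qed

lemma dich1:
  assumes "cell1 T c d" "a \<in> set T" "b \<in> set T"
  shows "(a \<le> c \<and> d \<le> b) \<or> (\<forall>x. c < x \<and> x < d \<longrightarrow> \<not> (a \<le> x \<and> x \<le> b))"
  using assms unfolding cell1_def by (smt (verit))

lemma child1:
  assumes "cell1 T c d" "set T \<subseteq> set T'"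
  shows "\<exists>d'. cell1 T' c d' \<and> d' \<le> d"
proof -
  let ?S = "{y \<in> set T'. c < y \<and> y \<le> d}"
  have fin: "finite ?S" by simp
  have ne: "?S \<noteq> {}" using assms by (auto simp: cell1_def)
  define d' where "d' = Min ?S"
  have d'S: "d' \<in> ?S" using Min_in[OF fin ne] d'_def by simp
  have "\<forall>y\<in>set T'. y \<le> c \<or> d' \<le> y"
  proof
    fix y assume y: "y \<in> set T'"
    show "y \<le> c \<or> d' \<le> y"
    proof (cases "c < y \<and> y \<le> d")
      case True then have "y \<in> ?S" using y by simp
      then show ?thesis unfolding d'_def using fin by (simp add: Min_le)
    next
      case False then show ?thesis using d'S by auto
    qed
  qed
  then show ?thesis using assms d'S by (auto simp: cell1_def)
qed

lemma parent1:
  assumes "cell1 T' c d" "set T \<subseteq> set T'" "0 \<in> set T" "1 \<in> set T" "0 \<le> c" "d \<le> 1"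
  shows "\<exists>c0 d0. cell1 T c0 d0 \<and> c0 \<le> c \<and> d \<le> d0"
proof -
  let ?A = "{y \<in> set T. y \<le> c}" and ?B = "{y \<in> set T. d \<le> y}"
  have fA: "finite ?A" and fB: "finite ?B" by simp_all
  have nA: "?A \<noteq> {}" and nB: "?B \<noteq> {}" using assms by auto
  define c0 where "c0 = Max ?A"
  define d0 where "d0 = Min ?B"
  have c0A: "c0 \<in> ?A" using Max_in[OF fA nA] c0_def by simp
  have d0B: "d0 \<in> ?B" using Min_in[OF fB nB] d0_def by simp
  have "\<forall>y\<in>set T. y \<le> c0 \<or> d0 \<le> y"
  proof
    fix y assume y: "y \<in> set T"
    then have "y \<le> c \<or> d \<le> y" using assms by (auto simp: cell1_def)
    then show "y \<le> c0 \<or> d0 \<le> y"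
    proof
      assume "y \<le> c" then have "y \<in> ?A" using y by simp
      then show ?thesis unfolding c0_def using fA by (simp add: Max_ge)
    next
      assume "d \<le> y" then have "y \<in> ?B" using y by simp
      then show ?thesis unfolding d0_def using fB by (simp add: Min_le)
    qed
  qed
  moreover have "c < d" using assms by (simp add: cell1_def)
  moreover have "c0 < d0" using c0A d0B calculation by auto
  ultimately have "cell1 T c0 d0" using c0A d0B unfolding cell1_def by blast
  then show ?thesis using c0A d0B by blast
qed

lemma cover1:
  assumes "a \<in> set T" "b \<in> set T" "a < b" "a \<le> x" "x \<le> b"
  shows "\<exists>c d. cell1 T c d \<and> a \<le> c \<and> d \<le> b \<and> c \<le> x \<and> x \<le> d"
proof (cases "x < b")
  case True
  let ?A = "{y \<in> set T. y \<le> x}" and ?B = "{y \<in> set T. x < y}"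
  have fA: "finite ?A" and fB: "finite ?B" by simp_all
  have nA: "?A \<noteq> {}" and nB: "?B \<noteq> {}" using assms True by auto
  define c where "c = Max ?A"
  define d where "d = Min ?B"
  have cA: "c \<in> ?A" using Max_in[OF fA nA] c_def by simp
  have dB: "d \<in> ?B" using Min_in[OF fB nB] d_def by simp
  have ac: "a \<le> c" unfolding c_def using fA assms by (simp add: Max_ge)
  have db: "d \<le> b" unfolding d_def using fB assms True by (simp add: Min_le)
  have "\<forall>y\<in>set T. y \<le> c \<or> d \<le> y"
  proof
    fix y assume y: "y \<in> set T"
    show "y \<le> c \<or> d \<le> y"
    proof (cases "y \<le> x")
      case True then have "y \<in> ?A" using y by simp
      then show ?thesis unfolding c_def using fA by (simp add: Max_ge)
    next
      case False then have "y \<in> ?B" using y by simp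
      then show ?thesis unfolding d_def using fB by (simp add: Min_le)
    qed
  qed
  moreover have "c < d" using cA dB by auto
  ultimately have "cell1 T c d" using cA dB unfolding cell1_def by blast
  then show ?thesis using cA dB ac db by (intro exI[of _ c] exI[of _ d]) auto
next
  case False
  then have xb: "x = b" using assms by simp
  let ?A = "{y \<in> set T. y < b}"
  have fA: "finite ?A" by simp
  have nA: "?A \<noteq> {}" using assms by auto
  define c where "c = Max ?A"
  have cA: "c \<in> ?A" using Max_in[OF fA nA] c_def by simp
  have ac: "a \<le> c" unfolding c_def using fA assms by (simp add: Max_ge)
  have "\<forall>y\<in>set T. y \<le> c \<or> b \<le> y"
  proof
    fix y assume y: "y \<in> set T"
    show "y \<le> c \<or> b \<le> y"
    proof (cases "y < b")
      case True then have "y \<in> ?A" using y by simp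
      then show ?thesis unfolding c_def using fA by (simp add: Max_ge)
    next
      case False then show ?thesis by simp
    qed
  qed
  moreover have "c < b" using cA by auto
  ultimately have "cell1 T c b" using cA assms unfolding cell1_def by blast
  then show ?thesis using cA ac xb assms by (intro exI[of _ c] exI[of _ b]) auto
qed

lemma kinv_one: "kinv q t \<Longrightarrow> 1 \<in> set t"
  unfolding kinv_def by (metis (mono_tags) Suc_eq_plus1 filter_False le_zero_eq length_0_conv nat.simps(3))

lemma anc1:
  assumes k: "kinv q t" and s': "sorted t'" and ms: "mset t \<subseteq># mset t'" and st': "set t' \<subseteq> {0..1}"
    and j: "j + q + 1 < length t'" and ab: "t'!j < t'!(j+q+1)"
  shows "\<exists>j'. j' + q + 1 < length t \<and> t!j' \<le> t'!j \<and> t'!(j+q+1) \<le> t!(j'+q+1)"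
proof -
  let ?a = "t'!j" and ?b = "t'!(j+q+1)"
  have s: "sorted t" using k by (simp add: kinv_def)
  have a01: "0 \<le> ?a" "?b \<le> 1" using st' j by (auto simp: subset_iff)
  then have a1: "?a < 1" using ab by simp
  let ?I = "{i. i < length t \<and> t!i \<le> ?a}"
  have fin: "finite ?I" by simp
  have "0 \<in> set t" using k by (simp add: kinv_def)
  then obtain i0 where "i0 < length t" "t!i0 = 0" by (auto simp: in_set_conv_nth)
  then have "i0 \<in> ?I" using a01 by simp
  then have ne: "?I \<noteq> {}" by blast
  define j' where "j' = Max ?I"
  have j'I: "j' \<in> ?I" using Max_in[OF fin ne] j'_def by simp
  have gt: "\<And>i. i < length t \<Longrightarrow> j' < i \<longleftrightarrow> ?a < t!i"
  proof -
    fix i assume i: "i < length t"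
    show "j' < i \<longleftrightarrow> ?a < t!i"
    proof
      assume "j' < i"
      show "?a < t!i"
      proof (rule ccontr)
        assume "\<not> ?a < t!i" then have "i \<in> ?I" using i by simp
        then have "i \<le> j'" unfolding j'_def by (rule Max_ge[OF fin])
        then show False using \<open>j' < i\<close> by simp
      qed
    next
      assume "?a < t!i"
      show "j' < i"
      proof (rule ccontr)
        assume "\<not> j' < i" then have "i \<le> j'" by simp
        then have "t!i \<le> t!j'" using s j'I by (intro sorted_nth_mono) auto
        then show False using \<open>?a < t!i\<close> j'I by simp
      qed
    qed
  qed
  have "{i. i < length t \<and> t!i = 1} \<subseteq> {j'<..<length t}" using gt a1 by auto
  then have "card {i. i < length t \<and> t!i = 1} \<le> card {j'<..<length t}" by (intro card_mono) auto
  moreover have "q + 1 \<le> card {i. i < length t \<and> t!i = 1}"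
    using k by (simp add: kinv_def length_filter_conv_card)
  ultimately have len: "j' + q + 1 < length t" by simp
  have cnt': "length (filter (\<lambda>x. ?a < x \<and> x < ?b) t') \<le> q"
  proof -
    have "{i. i < length t' \<and> ?a < t'!i \<and> t'!i < ?b} \<subseteq> {j<..<j+q+1}"
    proof
      fix i assume i: "i \<in> {i. i < length t' \<and> ?a < t'!i \<and> t'!i < ?b}"
      have "j < i"
      proof (rule ccontr)
        assume "\<not> j < i" then have "i \<le> j" by simp
        then have "t'!i \<le> ?a" using s' j by (intro sorted_nth_mono) auto
        then show False using i by simp
      qed
      moreover have "i < j+q+1"
      proof (rule ccontr)
        assume "\<not> i < j+q+1" then have "j+q+1 \<le> i" by simp
        then have "?b \<le> t'!i" using s' i by (intro sorted_nth_mono) auto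
        then show False using i by simp
      qed
      ultimately show "i \<in> {j<..<j+q+1}" by simp
    qed
    then have "card {i. i < length t' \<and> ?a < t'!i \<and> t'!i < ?b} \<le> card {j<..<j+q+1}" by (intro card_mono) auto
    then show ?thesis by (simp add: length_filter_conv_card)
  qed
  have cnt: "length (filter (\<lambda>x. ?a < x \<and> x < ?b) t) \<le> q"
  proof -
    have "size (filter_mset (\<lambda>x. ?a < x \<and> x < ?b) (mset t)) \<le> size (filter_mset (\<lambda>x. ?a < x \<and> x < ?b) (mset t'))"
      by (intro size_mset_mono multiset_filter_mono ms)
    then have "length (filter (\<lambda>x. ?a < x \<and> x < ?b) t) \<le> length (filter (\<lambda>x. ?a < x \<and> x < ?b) t')"
      by (metis mset_filter size_mset)
    then show ?thesis using cnt' by simp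
  qed
  have "?b \<le> t!(j'+q+1)"
  proof (rule ccontr)
    assume "\<not> ?b \<le> t!(j'+q+1)"
    then have lt: "t!(j'+q+1) < ?b" by simp
    have "{j'<..j'+q+1} \<subseteq> {i. i < length t \<and> ?a < t!i \<and> t!i < ?b}"
    proof
      fix i assume i: "i \<in> {j'<..j'+q+1}"
      then have il: "i < length t" using len by simp
      have "?a < t!i" using gt[OF il] i by simp
      moreover have "t!i \<le> t!(j'+q+1)" using s i len by (intro sorted_nth_mono) auto
      ultimately show "i \<in> {i. i < length t \<and> ?a < t!i \<and> t!i < ?b}" using il lt by simp
    qed
    then have "card {j'<..j'+q+1} \<le> card {i. i < length t \<and> ?a < t!i \<and> t!i < ?b}" by (intro card_mono) auto
    then have "q + 1 \<le> length (filter (\<lambda>x. ?a < x \<and> x < ?b) t)" by (simp add: length_filter_conv_card)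
    then show False using cnt by simp
  qed
  then show ?thesis using len j'I by auto
qed




lemma knots_Suc: "knots K0 (Suc k) i = refine_knots (knots K0 k i)"
  by (simp add: knots_def)

locale hm =
  fixes p :: "'d::finite \<Rightarrow> nat" and K0 :: "'d \<Rightarrow> real list"
  assumes ok: "\<forall>i. open_knots (p i) (K0 i)"
begin

lemma kinv_kn: "kinv (p i) (knots K0 k i)"
proof (induction k)
  case 0 then show ?case using ok open_kinv by (simp add: knots_def)
next
  case (Suc k) then show ?case by (simp add: knots_Suc kinv_refine)
qed

lemma sorted_kn: "sorted (knots K0 k i)"
  using kinv_kn by (simp add: kinv_def)

lemma set_kn_01: "set (knots K0 k i) \<subseteq> {0..1}"
  using kinv_kn by (simp add: kinv_def)

lemma set_kn_mono: "k \<le> n \<Longrightarrow> set (knots K0 k i) \<subseteq> set (knots K0 n i)"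
proof (induction n rule: dec_induct)
  case base then show ?case by simp
next
  case (step n) then show ?case by (auto simp: knots_Suc set_refine)
qed

lemma cells_char:
  "Q \<in> cells K0 k \<longleftrightarrow> (\<exists>c d. Q = cbox c d \<and> (\<forall>i. cell1 (knots K0 k i) (c$i) (d$i)))"
proof
  assume "Q \<in> cells K0 k"
  then obtain m where Q: "Q = cbox (\<chi> i. knots K0 k i ! m i) (\<chi> i. knots K0 k i ! Suc (m i))"
    and m: "\<forall>i. Suc (m i) < length (knots K0 k i) \<and> knots K0 k i ! m i < knots K0 k i ! Suc (m i)"
    unfolding cells_def by blast
  have "\<forall>i. cell1 (knots K0 k i) ((\<chi> i. knots K0 k i ! m i)$i) ((\<chi> i. knots K0 k i ! Suc (m i))$i)"
    using m sorted_kn cell1_nth by simp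
  then show "\<exists>c d. Q = cbox c d \<and> (\<forall>i. cell1 (knots K0 k i) (c$i) (d$i))" using Q by blast
next
  assume "\<exists>c d. Q = cbox c d \<and> (\<forall>i. cell1 (knots K0 k i) (c$i) (d$i))"
  then obtain c d where Q: "Q = cbox c d" and cd: "\<forall>i. cell1 (knots K0 k i) (c$i) (d$i)" by blast
  have "\<forall>i. \<exists>m. Suc m < length (knots K0 k i) \<and> knots K0 k i ! m = c$i \<and> knots K0 k i ! Suc m = d$i"
    using cd cell1_ex_nth sorted_kn by blast
  then obtain m where m: "\<forall>i. Suc (m i) < length (knots K0 k i) \<and> knots K0 k i ! m i = c$i \<and> knots K0 k i ! Suc (m i) = d$i"
    by metis
  have c: "c = (\<chi> i. knots K0 k i ! m i)" and d: "d = (\<chi> i. knots K0 k i ! Suc (m i))"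
    using m by (auto simp: vec_eq_iff)
  have "\<forall>i. knots K0 k i ! m i < knots K0 k i ! Suc (m i)" using m cd by (simp add: cell1_def)
  then show "Q \<in> cells K0 k" unfolding cells_def using Q c d m by blast
qed

lemma cell_int: "Q \<in> cells K0 k \<Longrightarrow> interior Q \<noteq> {}"
proof -
  assume "Q \<in> cells K0 k"
  then obtain c d where Q: "Q = cbox c d" and cd: "\<forall>i. cell1 (knots K0 k i) (c$i) (d$i)"
    unfolding cells_char by blast
  have "\<forall>i. c$i < d$i" using cd by (simp add: cell1_def)
  then have "box c d \<noteq> {}" by (simp add: interval_ne_empty_cart)
  then show ?thesis using Q by (simp add: interior_cbox)
qed

lemma cell_ne: "Q \<in> cells K0 k \<Longrightarrow> Q \<noteq> {}"
  using cell_int interior_subset by blast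

lemma unit_cube_cart: "x \<in> unit_cube \<longleftrightarrow> (\<forall>i. 0 \<le> x$i \<and> x$i \<le> (1::real))"
  by (simp add: unit_cube_def mem_box_cart)

lemma cell_cube: "Q \<in> cells K0 k \<Longrightarrow> Q \<subseteq> unit_cube"
proof -
  assume "Q \<in> cells K0 k"
  then obtain c d where Q: "Q = cbox c d" and cd: "\<forall>i. cell1 (knots K0 k i) (c$i) (d$i)"
    unfolding cells_char by blast
  have "\<forall>i. 0 \<le> c$i \<and> d$i \<le> 1" using cd set_kn_01 unfolding cell1_def by fastforce
  then show "Q \<subseteq> unit_cube" unfolding Q unit_cube_def by (intro subset_interval_imp_cart(1)) auto
qed

lemma box_dich:
  assumes Q: "Q \<in> cells K0 n" and ab: "\<forall>i. a$i \<in> set (knots K0 n i) \<and> b$i \<in> set (knots K0 n i)"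
  shows "Q \<subseteq> cbox a b \<or> interior Q \<inter> cbox a b = {}"
proof -
  obtain c d where Qe: "Q = cbox c d" and cd: "\<forall>i. cell1 (knots K0 n i) (c$i) (d$i)"
    using Q unfolding cells_char by blast
  have D: "\<forall>i. (a$i \<le> c$i \<and> d$i \<le> b$i) \<or> (\<forall>x. c$i < x \<and> x < d$i \<longrightarrow> \<not> (a$i \<le> x \<and> x \<le> b$i))"
    using cd ab dich1 by blast
  show ?thesis
  proof (cases "\<forall>i. a$i \<le> c$i \<and> d$i \<le> b$i")
    case True then show ?thesis using Qe subset_interval_imp_cart(1) by blast
  next
    case False
    then obtain i where "\<forall>x. c$i < x \<and> x < d$i \<longrightarrow> \<not> (a$i \<le> x \<and> x \<le> b$i)" using D by blast
    have "box c d \<inter> cbox a b = {}"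
    proof (rule ccontr)
      assume "box c d \<inter> cbox a b \<noteq> {}"
      then obtain x where "x \<in> box c d" "x \<in> cbox a b" by blast
      then have "c$i < x$i \<and> x$i < d$i" "a$i \<le> x$i \<and> x$i \<le> b$i" by (auto simp: mem_box_cart)
      then show False using \<open>\<forall>x. c$i < x \<and> x < d$i \<longrightarrow> \<not> (a$i \<le> x \<and> x \<le> b$i)\<close> by blast
    qed
    then show ?thesis using Qe by (simp add: interior_cbox)
  qed
qed

lemma cell_dich:
  assumes "Q \<in> cells K0 n" "R \<in> cells K0 k" "k \<le> n"
  shows "Q \<subseteq> R \<or> interior Q \<inter> R = {}"
proof -
  obtain c d where Re: "R = cbox c d" and cd: "\<forall>i. cell1 (knots K0 k i) (c$i) (d$i)"
    using assms unfolding cells_char by blast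
  have "\<forall>i. c$i \<in> set (knots K0 n i) \<and> d$i \<in> set (knots K0 n i)"
    using cd set_kn_mono[OF assms(3)] by (auto simp: cell1_def)
  then show ?thesis using box_dich[OF assms(1)] Re by blast
qed

lemma supp_pts:
  assumes "j \<in> bspl p K0 l"
  shows "\<forall>i. knots K0 l i ! j i \<in> set (knots K0 l i) \<and> knots K0 l i ! (j i + p i + 1) \<in> set (knots K0 l i)"
proof
  fix i
  have "j i + p i + 1 < length (knots K0 l i)" using assms by (simp add: bspl_def)
  moreover then have "j i < length (knots K0 l i)" by simp
  ultimately show "knots K0 l i ! j i \<in> set (knots K0 l i) \<and> knots K0 l i ! (j i + p i + 1) \<in> set (knots K0 l i)"
    by simp
qed

lemma supp_dich:
  assumes "Q \<in> cells K0 n" "j \<in> bspl p K0 l" "l \<le> n"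
  shows "Q \<subseteq> supp_b p K0 l j \<or> interior Q \<inter> supp_b p K0 l j = {}"
proof -
  have "\<forall>i. (\<chi> i. knots K0 l i ! j i)$i \<in> set (knots K0 n i) \<and> (\<chi> i. knots K0 l i ! (j i + p i + 1))$i \<in> set (knots K0 n i)"
    using supp_pts[OF assms(2)] set_kn_mono[OF assms(3)] by auto
  then show ?thesis using box_dich[OF assms(1)] unfolding supp_b_def by blast
qed

lemma cell_child:
  assumes "Q \<in> cells K0 k" shows "\<exists>C \<in> cells K0 (Suc k). C \<subseteq> Q"
proof -
  obtain c d where Qe: "Q = cbox c d" and cd: "\<forall>i. cell1 (knots K0 k i) (c$i) (d$i)"
    using assms unfolding cells_char by blast
  have "\<forall>i. \<exists>d'. cell1 (knots K0 (Suc k) i) (c$i) d' \<and> d' \<le> d$i"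
  proof
    fix i show "\<exists>d'. cell1 (knots K0 (Suc k) i) (c$i) d' \<and> d' \<le> d$i"
      using child1[OF spec[OF cd, of i] set_kn_mono[of k "Suc k" i]] by simp
  qed
  then obtain f where f: "\<forall>i. cell1 (knots K0 (Suc k) i) (c$i) (f i) \<and> f i \<le> d$i" by metis
  let ?C = "cbox c (\<chi> i. f i)"
  have "?C \<in> cells K0 (Suc k)" unfolding cells_char using f by (intro exI[of _ c] exI[of _ "\<chi> i. f i"]) auto
  moreover have "?C \<subseteq> Q" unfolding Qe using f by (intro subset_interval_imp_cart(1)) auto
  ultimately show ?thesis by blast
qed

lemma supp_int_lt:
  assumes "interior (supp_b p K0 l j) \<noteq> {}"
  shows "\<forall>i. knots K0 l i ! j i < knots K0 l i ! (j i + p i + 1)"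
  using assms unfolding supp_b_def interior_cbox interval_ne_empty_cart by simp

lemma supp_cover:
  assumes j: "j \<in> bspl p K0 l" and ne: "interior (supp_b p K0 l j) \<noteq> {}" and x: "x \<in> supp_b p K0 l j"
  shows "\<exists>Q \<in> cells K0 l. x \<in> Q \<and> Q \<subseteq> supp_b p K0 l j"
proof -
  let ?a = "\<lambda>i. knots K0 l i ! j i" and ?b = "\<lambda>i. knots K0 l i ! (j i + p i + 1)"
  have lt: "\<forall>i. ?a i < ?b i" using supp_int_lt[OF ne] .
  have xi: "\<forall>i. ?a i \<le> x$i \<and> x$i \<le> ?b i" using x unfolding supp_b_def mem_box_cart by simp
  have "\<forall>i. \<exists>c d. cell1 (knots K0 l i) c d \<and> ?a i \<le> c \<and> d \<le> ?b i \<and> c \<le> x$i \<and> x$i \<le> d"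
    using cover1 supp_pts[OF j] lt xi by blast
  then obtain c d where cd: "\<forall>i. cell1 (knots K0 l i) (c i) (d i) \<and> ?a i \<le> c i \<and> d i \<le> ?b i \<and> c i \<le> x$i \<and> x$i \<le> d i"
    by metis
  let ?Q = "cbox (\<chi> i. c i) (\<chi> i. d i)"
  have "?Q \<in> cells K0 l" unfolding cells_char using cd by (intro exI[of _ "\<chi> i. c i"] exI[of _ "\<chi> i. d i"]) auto
  moreover have "x \<in> ?Q" using cd by (simp add: mem_box_cart)
  moreover have "?Q \<subseteq> supp_b p K0 l j" unfolding supp_b_def using cd by (intro subset_interval_imp_cart(1)) auto
  ultimately show ?thesis by blast
qed

lemma supp_cube:
  assumes "j \<in> bspl p K0 l" shows "supp_b p K0 l j \<subseteq> unit_cube"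
proof -
  have "\<forall>i. 0 \<le> knots K0 l i ! j i \<and> knots K0 l i ! (j i + p i + 1) \<le> 1"
    using supp_pts[OF assms] set_kn_01 by fastforce
  then show ?thesis unfolding supp_b_def unit_cube_def by (intro subset_interval_imp_cart(1)) auto
qed

lemma supp_anc:
  assumes j: "j \<in> bspl p K0 (Suc l)" and ne: "interior (supp_b p K0 (Suc l) j) \<noteq> {}"
  shows "\<exists>j' \<in> bspl p K0 l. supp_b p K0 (Suc l) j \<subseteq> supp_b p K0 l j'"
proof -
  have lt: "\<forall>i. knots K0 (Suc l) i ! j i < knots K0 (Suc l) i ! (j i + p i + 1)" using supp_int_lt[OF ne] .
  have "\<forall>i. \<exists>j'. j' + p i + 1 < length (knots K0 l i) \<and> knots K0 l i ! j' \<le> knots K0 (Suc l) i ! j i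
      \<and> knots K0 (Suc l) i ! (j i + p i + 1) \<le> knots K0 l i ! (j' + p i + 1)"
  proof
    fix i
    show "\<exists>j'. j' + p i + 1 < length (knots K0 l i) \<and> knots K0 l i ! j' \<le> knots K0 (Suc l) i ! j i
      \<and> knots K0 (Suc l) i ! (j i + p i + 1) \<le> knots K0 l i ! (j' + p i + 1)"
    proof -
      have ms: "mset (knots K0 l i) \<subseteq># mset (knots K0 (Suc l) i)" by (simp add: knots_Suc mset_sub_refine)
      have jl: "j i + p i + 1 < length (knots K0 (Suc l) i)" using j by (simp add: bspl_def)
      show ?thesis using anc1[OF kinv_kn[of i l] sorted_kn[of "Suc l" i] ms set_kn_01 jl] lt by blast
    qed
  qed
  then obtain f where f: "\<forall>i. f i + p i + 1 < length (knots K0 l i) \<and> knots K0 l i ! f i \<le> knots K0 (Suc l) i ! j i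
      \<and> knots K0 (Suc l) i ! (j i + p i + 1) \<le> knots K0 l i ! (f i + p i + 1)" by metis
  have "f \<in> bspl p K0 l" using f by (simp add: bspl_def)
  moreover have "supp_b p K0 (Suc l) j \<subseteq> supp_b p K0 l f"
    unfolding supp_b_def using f by (intro subset_interval_imp_cart(1)) auto
  ultimately show ?thesis by blast
qed

lemma finite_cells: "finite (cells K0 k)"
proof -
  define B where "B = Max (range (\<lambda>i. length (knots K0 k i)))"
  have Bi: "\<And>i. length (knots K0 k i) \<le> B" unfolding B_def by (simp add: Max_ge)
  have "{m. \<forall>i. Suc (m i) < length (knots K0 k i) \<and> knots K0 k i ! m i < knots K0 k i ! Suc (m i)}
        \<subseteq> PiE UNIV (\<lambda>_. {..<B})"
    using Bi by (auto simp: PiE_def Pi_def extensional_def) (meson Bi Suc_lessD less_le_trans)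
  moreover have "finite (PiE (UNIV::'d set) (\<lambda>_. {..<B}))" by (intro finite_PiE) auto
  ultimately have fm: "finite {m. \<forall>i. Suc (m i) < length (knots K0 k i) \<and> knots K0 k i ! m i < knots K0 k i ! Suc (m i)}"
    by (rule finite_subset)
  have "cells K0 k = (\<lambda>m. cbox (\<chi> i. knots K0 k i ! m i) (\<chi> i. knots K0 k i ! Suc (m i))) `
     {m. \<forall>i. Suc (m i) < length (knots K0 k i) \<and> knots K0 k i ! m i < knots K0 k i ! Suc (m i)}"
    unfolding cells_def by auto
  then show ?thesis using fm by simp
qed

end



context hm begin

lemma hier_anti: "hier_mesh K0 \<Omega> \<Longrightarrow> m \<le> n \<Longrightarrow> \<Omega> n \<subseteq> \<Omega> m"
  unfolding hier_mesh_def by (metis lift_Suc_antimono_le)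

lemma omega_dich:
  assumes h: "hier_mesh K0 \<Omega>" and Q: "Q \<in> cells K0 n" and m: "m \<le> Suc n"
  shows "Q \<subseteq> \<Omega> m \<or> interior Q \<inter> \<Omega> m = {}"
proof (cases m)
  case 0 then show ?thesis using h cell_cube[OF Q] by (simp add: hier_mesh_def)
next
  case (Suc m0)
  obtain S where S: "S \<subseteq> cells K0 m0" "\<Omega> (Suc m0) = \<Union>S" using h unfolding hier_mesh_def by blast
  show ?thesis
  proof (cases "interior Q \<inter> \<Omega> m = {}")
    case False
    then obtain x R where "x \<in> interior Q" "R \<in> S" "x \<in> R" using S Suc by auto
    moreover have "Q \<subseteq> R \<or> interior Q \<inter> R = {}"
      using cell_dich[OF Q, of R m0] S calculation m Suc by auto
    ultimately have "Q \<subseteq> R" by blast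
    then show ?thesis using \<open>R \<in> S\<close> S Suc by auto
  qed simp
qed

lemma anchor:
  assumes h: "hier_mesh K0 \<Omega>" and aR: "(a,R) \<in> mesh K0 \<Omega>" and T: "T \<in> cells K0 n" "T \<subseteq> R"
    and g: "(m,g) \<in> hbasis p K0 \<Omega>" and Tg: "T \<subseteq> supp_b p K0 m g"
  shows "R \<subseteq> supp_b p K0 m g"
proof -
  have R: "R \<in> cells K0 a" "R \<subseteq> \<Omega> a" "\<not> R \<subseteq> \<Omega> (Suc a)" using aR by (auto simp: mesh_def)
  have gb: "g \<in> bspl p K0 m" "supp_b p K0 m g \<subseteq> \<Omega> m" using g by (auto simp: hbasis_def)
  have iT: "interior T \<noteq> {}" using cell_int[OF T(1)] .
  have iTR: "interior T \<subseteq> interior R" using T(2) by (rule interior_mono)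
  have "m \<le> a"
  proof (rule ccontr)
    assume "\<not> m \<le> a"
    then have "\<Omega> m \<subseteq> \<Omega> (Suc a)" using hier_anti[OF h] by simp
    then have "interior T \<subseteq> \<Omega> (Suc a)" using Tg gb interior_subset by blast
    moreover have "interior R \<inter> \<Omega> (Suc a) = {}" using omega_dich[OF h R(1), of "Suc a"] R(3) by simp
    ultimately show False using iT iTR by blast
  qed
  then have "R \<subseteq> supp_b p K0 m g \<or> interior R \<inter> supp_b p K0 m g = {}" using supp_dich[OF R(1) gb(1)] by simp
  moreover have "interior T \<subseteq> supp_b p K0 m g" using Tg interior_subset by blast
  ultimately show ?thesis using iT iTR by blast
qed

lemma chain:
  assumes h: "hier_mesh K0 \<Omega>"
  shows "g \<in> bspl p K0 m \<Longrightarrow> interior (supp_b p K0 m g) \<noteq> {} \<Longrightarrow> \<not> supp_b p K0 m g \<subseteq> \<Omega> (Suc m)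
     \<Longrightarrow> \<exists>m' g'. (m',g') \<in> hbasis p K0 \<Omega> \<and> supp_b p K0 m g \<subseteq> supp_b p K0 m' g'"
proof (induction m arbitrary: g)
  case 0
  then have "supp_b p K0 0 g \<subseteq> \<Omega> 0" using h supp_cube by (simp add: hier_mesh_def)
  then have "(0,g) \<in> hbasis p K0 \<Omega>" using 0 by (simp add: hbasis_def)
  then show ?case by blast
next
  case (Suc l)
  show ?case
  proof (cases "supp_b p K0 (Suc l) g \<subseteq> \<Omega> (Suc l)")
    case True
    then have "(Suc l,g) \<in> hbasis p K0 \<Omega>" using Suc.prems by (simp add: hbasis_def)
    then show ?thesis by blast
  next
    case False
    obtain g' where g': "g' \<in> bspl p K0 l" "supp_b p K0 (Suc l) g \<subseteq> supp_b p K0 l g'"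
      using supp_anc Suc.prems by blast
    have "interior (supp_b p K0 l g') \<noteq> {}" using Suc.prems(2) interior_mono[OF g'(2)] by blast
    moreover have "\<not> supp_b p K0 l g' \<subseteq> \<Omega> (Suc l)" using False g'(2) by blast
    ultimately obtain m' g'' where "(m',g'') \<in> hbasis p K0 \<Omega>" "supp_b p K0 l g' \<subseteq> supp_b p K0 m' g''"
      using Suc.IH g'(1) by blast
    then show ?thesis using g'(2) by blast
  qed
qed

lemma adm_nb:
  assumes "admissible p K0 \<Omega>" "(a,R) \<in> mesh K0 \<Omega>" "(b,S) \<in> mesh K0 \<Omega>" "(m,g) \<in> hbasis p K0 \<Omega>"
    "R \<subseteq> supp_b p K0 m g" "S \<subseteq> supp_b p K0 m g"
  shows "a \<le> b + 1 \<and> b \<le> a + 1"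
proof -
  have "(b,S) \<in> neighbors p K0 \<Omega> (a,R)" using assms unfolding neighbors_def by auto
  then show ?thesis using assms(1,2) unfolding admissible_def by fastforce
qed

end



context hm begin

lemma iter_sub: "M \<subseteq> mesh K0 \<Omega> \<Longrightarrow> marked_iter p K0 \<Omega> M i \<subseteq> mesh K0 \<Omega>"
  by (induction i) (auto simp: bad_neighbors_def neighbors_def)

lemma MC_sub: "M \<subseteq> mesh K0 \<Omega> \<Longrightarrow> marked_closure p K0 \<Omega> M \<subseteq> mesh K0 \<Omega>"
  unfolding marked_closure_def using iter_sub[of M \<Omega>] by (simp add: UN_subset_iff)

lemma MC_closed: "x \<in> marked_closure p K0 \<Omega> M \<Longrightarrow> y \<in> bad_neighbors p K0 \<Omega> x \<Longrightarrow> y \<in> marked_closure p K0 \<Omega> M"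
  unfolding marked_closure_def
proof -
  assume "x \<in> (\<Union>i. marked_iter p K0 \<Omega> M i)" "y \<in> bad_neighbors p K0 \<Omega> x"
  then obtain i where "x \<in> marked_iter p K0 \<Omega> M i" by blast
  then have "y \<in> marked_iter p K0 \<Omega> M (Suc i)" using \<open>y \<in> _\<close> by auto
  then show "y \<in> (\<Union>i. marked_iter p K0 \<Omega> M i)" by blast
qed

lemma M_sub_MC: "M \<subseteq> marked_closure p K0 \<Omega> M"
proof
  fix x assume "x \<in> M"
  then have "x \<in> marked_iter p K0 \<Omega> M 0" by simp
  then show "x \<in> marked_closure p K0 \<Omega> M" unfolding marked_closure_def by blast
qed

lemma rs0: "refine_step p K0 \<Omega> M 0 = \<Omega> 0"
  by (simp add: refine_step_def)

lemma rsS: "refine_step p K0 \<Omega> M (Suc l) = \<Omega> (Suc l) \<union> \<Union>{T. (l,T) \<in> marked_closure p K0 \<Omega> M}"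
  by (simp add: refine_step_def)

lemma rs_mono: "\<Omega> k \<subseteq> refine_step p K0 \<Omega> M k"
  by (cases k) (auto simp: rs0 rsS)

lemma rs_hier:
  assumes h: "hier_mesh K0 \<Omega>" and M: "M \<subseteq> mesh K0 \<Omega>"
  shows "hier_mesh K0 (refine_step p K0 \<Omega> M)"
proof -
  let ?MC = "marked_closure p K0 \<Omega> M" and ?O = "refine_step p K0 \<Omega> M"
  have mc: "\<And>l T. (l,T) \<in> ?MC \<Longrightarrow> T \<in> cells K0 l \<and> T \<subseteq> \<Omega> l"
    using MC_sub[OF M] by (auto simp: mesh_def)
  have a: "?O 0 = unit_cube" using h by (simp add: rs0 hier_mesh_def)
  have b: "\<forall>k. ?O (Suc k) \<subseteq> ?O k"
  proof
    fix k show "?O (Suc k) \<subseteq> ?O k"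
    proof (cases k)
      case 0
      have "\<Omega> (Suc 0) \<subseteq> \<Omega> 0" using h unfolding hier_mesh_def by blast
      then show ?thesis using 0 mc by (auto simp: rs0 rsS)
    next
      case (Suc l)
      have "\<Omega> (Suc (Suc l)) \<subseteq> \<Omega> (Suc l)" using h by (simp add: hier_mesh_def)
      moreover have "\<Union>{T. (Suc l, T) \<in> ?MC} \<subseteq> \<Omega> (Suc l)" using mc by blast
      ultimately show ?thesis using Suc by (auto simp: rsS)
    qed
  qed
  have c: "\<forall>k. \<exists>S \<subseteq> cells K0 k. ?O (Suc k) = \<Union>S"
  proof
    fix k
    obtain S where S: "S \<subseteq> cells K0 k" "\<Omega> (Suc k) = \<Union>S" using h unfolding hier_mesh_def by blast
    have "S \<union> {T. (k,T) \<in> ?MC} \<subseteq> cells K0 k" using S mc by blast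
    moreover have "?O (Suc k) = \<Union>(S \<union> {T. (k,T) \<in> ?MC})" using S by (auto simp: rsS)
    ultimately show "\<exists>S \<subseteq> cells K0 k. ?O (Suc k) = \<Union>S" by blast
  qed
  obtain N where N: "\<forall>k\<ge>N. \<Omega> k = {}" using h unfolding hier_mesh_def by blast
  have d: "\<forall>k\<ge>Suc N. ?O k = {}"
  proof (intro allI impI)
    fix k assume k: "Suc N \<le> k"
    then obtain l where l: "k = Suc l" "N \<le> l" by (cases k) auto
    have "{T. (l,T) \<in> ?MC} = {}" using mc N l cell_ne by fastforce
    then show "?O k = {}" using N l by (simp add: rsS)
  qed
  show ?thesis using a b c d unfolding hier_mesh_def by blast
qed

lemma mdesc:
  assumes h: "hier_mesh K0 \<Omega>" and M: "M \<subseteq> mesh K0 \<Omega>"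
    and nT: "(n,T) \<in> mesh K0 (refine_step p K0 \<Omega> M)"
  shows "\<exists>a R. (a,R) \<in> mesh K0 \<Omega> \<and> T \<subseteq> R \<and>
     ((n = a \<and> (a,R) \<notin> marked_closure p K0 \<Omega> M) \<or> (n = Suc a \<and> (a,R) \<in> marked_closure p K0 \<Omega> M))"
proof -
  let ?MC = "marked_closure p K0 \<Omega> M" and ?O = "refine_step p K0 \<Omega> M"
  have T: "T \<in> cells K0 n" "T \<subseteq> ?O n" "\<not> T \<subseteq> ?O (Suc n)" using nT by (auto simp: mesh_def)
  show ?thesis
  proof (cases "T \<subseteq> \<Omega> n")
    case True
    have "\<not> T \<subseteq> \<Omega> (Suc n)" using T(3) rs_mono by blast
    then have "(n,T) \<in> mesh K0 \<Omega>" using True T(1) by (simp add: mesh_def)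
    moreover have "(n,T) \<notin> ?MC" using T(3) by (auto simp: rsS)
    ultimately show ?thesis by blast
  next
    case False
    then obtain a where a: "n = Suc a" using T(2) by (cases n) (auto simp: rs0)
    have "interior T \<inter> \<Omega> n = {}" using omega_dich[OF h T(1), of n] False by simp
    moreover obtain x where x: "x \<in> interior T" using cell_int[OF T(1)] by blast
    ultimately have "x \<notin> \<Omega> n" by blast
    moreover have "x \<in> ?O n" using x T(2) interior_subset by blast
    ultimately obtain R where R: "(a,R) \<in> ?MC" "x \<in> R" using a by (auto simp: rsS)
    have Rm: "(a,R) \<in> mesh K0 \<Omega>" using R MC_sub[OF M] by blast
    then have "R \<in> cells K0 a" by (simp add: mesh_def)
    then have "T \<subseteq> R \<or> interior T \<inter> R = {}" using cell_dich[OF T(1)] a by simp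
    then have "T \<subseteq> R" using x R by blast
    then show ?thesis using Rm R a by blast
  qed
qed

lemma rs_bound:
  assumes adm: "admissible p K0 \<Omega>" and M: "M \<subseteq> mesh K0 \<Omega>"
    and n1: "(n1,T1) \<in> mesh K0 (refine_step p K0 \<Omega> M)"
    and n2: "(n2,T2) \<in> mesh K0 (refine_step p K0 \<Omega> M)"
    and lj: "(l,j) \<in> hbasis p K0 (refine_step p K0 \<Omega> M)"
    and T1s: "T1 \<subseteq> supp_b p K0 l j" and T2s: "T2 \<subseteq> supp_b p K0 l j"
  shows "n1 \<le> n2 + 1"
proof -
  let ?MC = "marked_closure p K0 \<Omega> M" and ?O = "refine_step p K0 \<Omega> M"
  let ?S = "supp_b p K0 l j"
  have h: "hier_mesh K0 \<Omega>" using adm by (simp add: admissible_def)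
  have h': "hier_mesh K0 ?O" using rs_hier[OF h M] .
  have T1: "T1 \<in> cells K0 n1" and T2: "T2 \<in> cells K0 n2" using n1 n2 by (auto simp: mesh_def)
  have ljb: "j \<in> bspl p K0 l" "?S \<subseteq> ?O l" "\<not> ?S \<subseteq> ?O (Suc l)" using lj by (auto simp: hbasis_def)
  obtain a1 R1 where A1: "(a1,R1) \<in> mesh K0 \<Omega>" "T1 \<subseteq> R1"
     "(n1 = a1 \<and> (a1,R1) \<notin> ?MC) \<or> (n1 = Suc a1 \<and> (a1,R1) \<in> ?MC)"
    using mdesc[OF h M n1] by blast
  obtain a2 R2 where A2: "(a2,R2) \<in> mesh K0 \<Omega>" "T2 \<subseteq> R2"
     "(n2 = a2 \<and> (a2,R2) \<notin> ?MC) \<or> (n2 = Suc a2 \<and> (a2,R2) \<in> ?MC)"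
    using mdesc[OF h M n2] by blast
  show ?thesis
  proof (cases "?S \<subseteq> \<Omega> l")
    case True
    have "\<not> ?S \<subseteq> \<Omega> (Suc l)" using ljb(3) rs_mono by blast
    then have ljO: "(l,j) \<in> hbasis p K0 \<Omega>" using True ljb(1) by (simp add: hbasis_def)
    have R1s: "R1 \<subseteq> ?S" using anchor[OF h A1(1) T1 A1(2) ljO T1s] .
    have R2s: "R2 \<subseteq> ?S" using anchor[OF h A2(1) T2 A2(2) ljO T2s] .
    have ab: "a1 \<le> a2 + 1 \<and> a2 \<le> a1 + 1" using adm_nb[OF adm A1(1) A2(1) ljO R1s R2s] .
    show ?thesis
    proof (cases "n1 = Suc a1 \<and> n2 = a2 \<and> a1 = a2 + 1")
      case True
      then have "(a1,R1) \<in> ?MC" "(a2,R2) \<notin> ?MC" using A1(3) A2(3) by auto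
      moreover have "(a2,R2) \<in> bad_neighbors p K0 \<Omega> (a1,R1)"
        unfolding bad_neighbors_def neighbors_def using A2(1) ljO R1s R2s True by auto
      ultimately show ?thesis using MC_closed by blast
    next
      case False then show ?thesis using ab A1(3) A2(3) by auto
    qed
  next
    case False
    have lo: "l \<le> n2"
    proof (rule ccontr)
      assume "\<not> l \<le> n2"
      then have "?O l \<subseteq> ?O (Suc n2)" using hier_anti[OF h'] by simp
      then have "T2 \<subseteq> ?O (Suc n2)" using T2s ljb(2) by blast
      then show False using n2 by (simp add: mesh_def)
    qed
    obtain l0 where l0: "l = Suc l0"
      using False h supp_cube[OF ljb(1)] by (cases l) (auto simp: hier_mesh_def)
    have iS: "interior ?S \<noteq> {}" using cell_int[OF T1] interior_mono[OF T1s] by blast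
    obtain x where x: "x \<in> ?S" "x \<notin> \<Omega> l" using False by blast
    obtain Q where Q: "Q \<in> cells K0 l" "x \<in> Q" "Q \<subseteq> ?S" using supp_cover[OF ljb(1) iS x(1)] by blast
    have "interior Q \<inter> \<Omega> l = {}" using omega_dich[OF h Q(1), of l] Q(2) x(2) by auto
    moreover obtain y where y: "y \<in> interior Q" using cell_int[OF Q(1)] by blast
    ultimately have "y \<notin> \<Omega> l" by blast
    moreover have "y \<in> ?O l" using y Q(3) ljb(2) interior_subset by blast
    ultimately obtain P where P: "(l0,P) \<in> ?MC" "y \<in> P" using l0 by (auto simp: rsS)
    have Pm: "(l0,P) \<in> mesh K0 \<Omega>" using P MC_sub[OF M] by blast
    then have "P \<in> cells K0 l0" by (simp add: mesh_def)
    then have "Q \<subseteq> P \<or> interior Q \<inter> P = {}" using cell_dich[OF Q(1)] l0 by simp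
    then have QP: "Q \<subseteq> P" using y P by blast
    obtain j' where j': "j' \<in> bspl p K0 l0" "?S \<subseteq> supp_b p K0 l0 j'"
      using supp_anc[of j l0] ljb(1) iS l0 by blast
    have "interior (supp_b p K0 l0 j') \<noteq> {}" using iS interior_mono[OF j'(2)] by blast
    moreover have "\<not> supp_b p K0 l0 j' \<subseteq> \<Omega> (Suc l0)" using False j'(2) l0 by blast
    ultimately obtain m g where mg: "(m,g) \<in> hbasis p K0 \<Omega>" "supp_b p K0 l0 j' \<subseteq> supp_b p K0 m g"
      using chain[OF h j'(1)] by blast
    have PG: "P \<subseteq> supp_b p K0 m g" using anchor[OF h Pm Q(1) QP mg(1)] Q(3) j'(2) mg(2) by blast
    have R1G: "R1 \<subseteq> supp_b p K0 m g" using anchor[OF h A1(1) T1 A1(2) mg(1)] T1s j'(2) mg(2) by blast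
    have "a1 \<le> l0 + 1" using adm_nb[OF adm A1(1) Pm mg(1) R1G PG] by simp
    then show ?thesis using A1(3) lo l0 by auto
  qed
qed

lemma refine_adm:
  assumes adm: "admissible p K0 \<Omega>" and M: "M \<subseteq> mesh K0 \<Omega>"
  shows "admissible p K0 (refine_step p K0 \<Omega> M)"
proof -
  have h: "hier_mesh K0 \<Omega>" using adm by (simp add: admissible_def)
  show ?thesis unfolding admissible_def
  proof (rule conjI)
    show "hier_mesh K0 (refine_step p K0 \<Omega> M)" using rs_hier[OF h M] .
  next
   show "\<forall>kT\<in>mesh K0 (refine_step p K0 \<Omega> M). \<forall>kT'\<in>neighbors p K0 (refine_step p K0 \<Omega> M) kT. fst kT \<le> fst kT' + 1 \<and> fst kT' \<le> fst kT + 1"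
   proof (intro ballI)
    fix kT kT' assume a: "kT \<in> mesh K0 (refine_step p K0 \<Omega> M)" "kT' \<in> neighbors p K0 (refine_step p K0 \<Omega> M) kT"
    obtain n1 T1 where 1: "kT = (n1,T1)" by fastforce
    obtain n2 T2 where 2: "kT' = (n2,T2)" by fastforce
    from a 1 2 obtain l j where lj: "(l,j) \<in> hbasis p K0 (refine_step p K0 \<Omega> M)"
      "T1 \<subseteq> supp_b p K0 l j" "T2 \<subseteq> supp_b p K0 l j" "(n2,T2) \<in> mesh K0 (refine_step p K0 \<Omega> M)"
      unfolding neighbors_def by auto
    have "n1 \<le> n2 + 1" using rs_bound[OF adm M a(1)[unfolded 1] lj(4) lj(1) lj(2) lj(3)] .
    moreover have "n2 \<le> n1 + 1" using rs_bound[OF adm M lj(4) a(1)[unfolded 1] lj(1) lj(3) lj(2)] .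
    ultimately show "fst kT \<le> fst kT' + 1 \<and> fst kT' \<le> fst kT + 1" using 1 2 by simp
   qed
  qed
qed

end



context hm begin

lemma descend:
  assumes h: "hier_mesh K0 \<Omega>"
  shows "C \<in> cells K0 m \<Longrightarrow> C \<subseteq> \<Omega> m \<Longrightarrow> \<exists>n E. m \<le> n \<and> E \<subseteq> C \<and> (n,E) \<in> mesh K0 \<Omega>"
proof -
  obtain N where N: "\<forall>k\<ge>N. \<Omega> k = {}" using h unfolding hier_mesh_def by blast
  show "C \<in> cells K0 m \<Longrightarrow> C \<subseteq> \<Omega> m \<Longrightarrow> \<exists>n E. m \<le> n \<and> E \<subseteq> C \<and> (n,E) \<in> mesh K0 \<Omega>"
  proof (induction "N - m" arbitrary: m C rule: less_induct)
    case less
    show ?case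
    proof (cases "C \<subseteq> \<Omega> (Suc m)")
      case False
      then have "(m,C) \<in> mesh K0 \<Omega>" using less.prems by (simp add: mesh_def)
      then show ?thesis by blast
    next
      case True
      have "m < N"
      proof (rule ccontr)
        assume "\<not> m < N" then have "\<Omega> m = {}" using N by simp
        then show False using less.prems cell_ne by blast
      qed
      obtain C' where C': "C' \<in> cells K0 (Suc m)" "C' \<subseteq> C" using cell_child[OF less.prems(1)] by blast
      have "N - Suc m < N - m" using \<open>m < N\<close> by simp
      then obtain n E where "Suc m \<le> n" "E \<subseteq> C'" "(n,E) \<in> mesh K0 \<Omega>"
        using less.hyps[of "Suc m" C'] C' True by blast
      then show ?thesis using C'(2) by (intro exI[of _ n] exI[of _ E]) auto
    qed
  qed
qed

lemma bn_closed:
  assumes adm: "admissible p K0 \<Omega>" and adm': "admissible p K0 \<Omega>'" and le: "\<forall>k. \<Omega> k \<subseteq> \<Omega>' k"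
    and kT: "(k,T) \<in> mesh K0 \<Omega>" "T \<subseteq> \<Omega>' (Suc k)"
    and bn: "(k',T') \<in> bad_neighbors p K0 \<Omega> (k,T)"
  shows "T' \<subseteq> \<Omega>' (Suc k')"
proof (rule ccontr)
  assume nT': "\<not> T' \<subseteq> \<Omega>' (Suc k')"
  have h: "hier_mesh K0 \<Omega>" using adm by (simp add: admissible_def)
  have h': "hier_mesh K0 \<Omega>'" using adm' by (simp add: admissible_def)
  from bn obtain l g where lg: "(l,g) \<in> hbasis p K0 \<Omega>" "T \<subseteq> supp_b p K0 l g" "T' \<subseteq> supp_b p K0 l g"
    and kT': "(k',T') \<in> mesh K0 \<Omega>" and kk: "k' + 1 = k"
    unfolding bad_neighbors_def neighbors_def by auto
  let ?G = "supp_b p K0 l g"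
  have gb: "g \<in> bspl p K0 l" "?G \<subseteq> \<Omega> l" "\<not> ?G \<subseteq> \<Omega> (Suc l)" using lg(1) by (auto simp: hbasis_def)
  have T'm: "T' \<in> cells K0 k'" "T' \<subseteq> \<Omega> k'" "\<not> T' \<subseteq> \<Omega> (Suc k')" using kT' by (auto simp: mesh_def)
  have Tm: "T \<in> cells K0 k" using kT by (simp add: mesh_def)
  have "l \<le> k'"
  proof (rule ccontr)
    assume "\<not> l \<le> k'"
    then have "\<Omega> l \<subseteq> \<Omega> (Suc k')" using hier_anti[OF h] by simp
    then show False using T'm(3) lg(3) gb(2) by blast
  qed
  moreover have "\<not> l < k'"
  proof
    assume "l < k'"
    have iG: "interior ?G \<noteq> {}" using cell_int[OF Tm] interior_mono[OF lg(2)] by blast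
    obtain x where x: "x \<in> ?G" "x \<notin> \<Omega> (Suc l)" using gb(3) by blast
    obtain Q where Q: "Q \<in> cells K0 l" "x \<in> Q" "Q \<subseteq> ?G" using supp_cover[OF gb(1) iG x(1)] by blast
    have "(l,Q) \<in> mesh K0 \<Omega>" using Q x gb(2) by (auto simp: mesh_def)
    then have "k \<le> l + 1" using adm_nb[OF adm kT(1) _ lg(1) lg(2) Q(3)] by simp
    then show False using \<open>l < k'\<close> kk by simp
  qed
  ultimately have lk: "l = k'" by simp
  have gO': "(k',g) \<in> hbasis p K0 \<Omega>'"
    using gb lk le nT' lg(3) by (auto simp: hbasis_def)
  have T'O': "(k',T') \<in> mesh K0 \<Omega>'" using T'm le nT' by (auto simp: mesh_def)
  obtain C where C: "C \<in> cells K0 (Suc k)" "C \<subseteq> T" using cell_child[OF Tm] by blast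
  obtain n E where E: "Suc k \<le> n" "E \<subseteq> C" "(n,E) \<in> mesh K0 \<Omega>'"
    using descend[OF h' C(1)] C(2) kT(2) by blast
  have "E \<subseteq> supp_b p K0 k' g" using E(2) C(2) lg(2) lk by blast
  then have "n \<le> k' + 1" using adm_nb[OF adm' T'O' E(3) gO'] lg(3) lk by simp
  then show False using E(1) kk by simp
qed

lemma closure_eq:
  assumes adm: "admissible p K0 \<Omega>" and adm': "admissible p K0 \<Omega>'" and le: "\<forall>k. \<Omega> k \<subseteq> \<Omega>' k"
    and M: "M = {(k,T). (k,T) \<in> mesh K0 \<Omega> \<and> T \<subseteq> \<Omega>' (Suc k)}"
  shows "marked_closure p K0 \<Omega> M = M"
proof -
  have "\<forall>i. marked_iter p K0 \<Omega> M i \<subseteq> M"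
  proof
    fix i show "marked_iter p K0 \<Omega> M i \<subseteq> M"
    proof (induction i)
      case 0 then show ?case by simp
    next
      case (Suc i)
      have "\<Union> (bad_neighbors p K0 \<Omega> ` marked_iter p K0 \<Omega> M i) \<subseteq> M"
      proof
        fix y assume "y \<in> \<Union> (bad_neighbors p K0 \<Omega> ` marked_iter p K0 \<Omega> M i)"
        then obtain x where x: "x \<in> M" "y \<in> bad_neighbors p K0 \<Omega> x" using Suc.IH by blast
        obtain k T where xe: "x = (k,T)" by fastforce
        obtain k' T' where ye: "y = (k',T')" by fastforce
        have kT: "(k,T) \<in> mesh K0 \<Omega>" "T \<subseteq> \<Omega>' (Suc k)" using x xe M by auto
        have "T' \<subseteq> \<Omega>' (Suc k')" using bn_closed[OF adm adm' le kT] x(2) xe ye by simp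
        moreover have "(k',T') \<in> mesh K0 \<Omega>" using x(2) xe ye by (simp add: bad_neighbors_def neighbors_def)
        ultimately show "y \<in> M" using ye M by simp
      qed
      then show ?case using Suc.IH by simp
    qed
  qed
  then show ?thesis using M_sub_MC[of M] unfolding marked_closure_def by blast
qed

end



context hm begin

lemma reach:
  assumes adm': "admissible p K0 \<Omega>'"
  shows "admissible p K0 \<Omega> \<Longrightarrow> (\<forall>k. \<Omega> k \<subseteq> \<Omega>' k) \<Longrightarrow> (refine_rel p K0)\<^sup>*\<^sup>* \<Omega> \<Omega>'"
proof -
  have h': "hier_mesh K0 \<Omega>'" using adm' by (simp add: admissible_def)
  obtain N where N: "\<forall>k\<ge>N. \<Omega>' k = {}" using h' unfolding hier_mesh_def by blast
  define X where "X = (\<lambda>\<Omega>::nat \<Rightarrow> (real^'d) set. {(k,Q). Q \<in> cells K0 k \<and> Q \<subseteq> \<Omega>' (Suc k) \<and> \<not> Q \<subseteq> \<Omega> (Suc k)})"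
  have finX: "\<And>\<Omega>. finite (X \<Omega>)"
  proof -
    fix \<Omega> :: "nat \<Rightarrow> (real^'d) set"
    have "X \<Omega> \<subseteq> Sigma {..<N} (cells K0)"
    proof
      fix x assume "x \<in> X \<Omega>"
      then obtain k Q where x: "x = (k,Q)" "Q \<in> cells K0 k" "Q \<subseteq> \<Omega>' (Suc k)" unfolding X_def by blast
      have "k < N"
      proof (rule ccontr)
        assume "\<not> k < N" then have "\<Omega>' (Suc k) = {}" using N by simp
        then show False using x cell_ne by blast
      qed
      then show "x \<in> Sigma {..<N} (cells K0)" using x by simp
    qed
    moreover have "finite (Sigma {..<N} (cells K0))" using finite_cells by (intro finite_SigmaI) auto
    ultimately show "finite (X \<Omega>)" by (rule finite_subset)
  qed
  show "admissible p K0 \<Omega> \<Longrightarrow> (\<forall>k. \<Omega> k \<subseteq> \<Omega>' k) \<Longrightarrow> (refine_rel p K0)\<^sup>*\<^sup>* \<Omega> \<Omega>'"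
  proof (induction "card (X \<Omega>)" arbitrary: \<Omega> rule: less_induct)
    case less
    have adm: "admissible p K0 \<Omega>" and le: "\<forall>k. \<Omega> k \<subseteq> \<Omega>' k" using less.prems by auto
    have h: "hier_mesh K0 \<Omega>" using adm by (simp add: admissible_def)
    have le_suc: "\<And>k. (\<And>Q. (k,Q) \<notin> X \<Omega>) \<Longrightarrow> \<Omega>' (Suc k) \<subseteq> \<Omega> (Suc k)"
    proof -
      fix k assume nX: "\<And>Q. (k,Q) \<notin> X \<Omega>"
      obtain S where S: "S \<subseteq> cells K0 k" "\<Omega>' (Suc k) = \<Union>S" using h' unfolding hier_mesh_def by blast
      have "\<forall>Q\<in>S. Q \<subseteq> \<Omega> (Suc k)"
      proof
        fix Q assume "Q \<in> S"
        then have "Q \<in> cells K0 k" "Q \<subseteq> \<Omega>' (Suc k)" using S by auto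
        then show "Q \<subseteq> \<Omega> (Suc k)" using nX[of Q] unfolding X_def by blast
      qed
      then show "\<Omega>' (Suc k) \<subseteq> \<Omega> (Suc k)" using S by blast
    qed
    show ?case
    proof (cases "X \<Omega> = {}")
      case True
      have "\<Omega> = \<Omega>'"
      proof
        fix k show "\<Omega> k = \<Omega>' k"
        proof (cases k)
          case 0
          have "\<Omega> 0 = unit_cube" "\<Omega>' 0 = unit_cube" using h h' unfolding hier_mesh_def by blast+
          then show ?thesis using 0 by simp
        next
          case (Suc k0)
          have "\<And>Q. (k0,Q) \<notin> X \<Omega>" using True by simp
          then have "\<Omega>' (Suc k0) \<subseteq> \<Omega> (Suc k0)" by (rule le_suc)
          moreover have "\<Omega> (Suc k0) \<subseteq> \<Omega>' (Suc k0)" using le by blast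
          ultimately show ?thesis using Suc by simp
        qed
      qed
      then show ?thesis by simp
    next
      case False
      define k where "k = (LEAST k. \<exists>Q. (k,Q) \<in> X \<Omega>)"
      obtain x1 where "x1 \<in> X \<Omega>" using False by blast
      obtain k1 Q1 where "(k1,Q1) \<in> X \<Omega>" using \<open>x1 \<in> X \<Omega>\<close> surj_pair[of x1] by metis
      then have e1: "\<exists>k Q. (k,Q) \<in> X \<Omega>" by blast
      have ex: "\<exists>Q. (k,Q) \<in> X \<Omega>" unfolding k_def using LeastI_ex[OF e1] .
      then obtain Q where Q: "(k,Q) \<in> X \<Omega>" by blast
      have Qc: "Q \<in> cells K0 k" "Q \<subseteq> \<Omega>' (Suc k)" "\<not> Q \<subseteq> \<Omega> (Suc k)" using Q unfolding X_def by blast+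
      have "Q \<subseteq> \<Omega> k"
      proof (cases k)
        case 0
        have "\<Omega> 0 = unit_cube" using h unfolding hier_mesh_def by blast
        then show ?thesis using cell_cube[OF Qc(1)] 0 by simp
      next
        case (Suc k0)
        have "k0 < k" using Suc by simp
        then have "\<not> (\<exists>Q. (k0,Q) \<in> X \<Omega>)" unfolding k_def by (rule not_less_Least)
        then have "\<And>Q'. (k0,Q') \<notin> X \<Omega>" by blast
        then have A: "\<Omega>' (Suc k0) \<subseteq> \<Omega> (Suc k0)" by (rule le_suc)
        have "\<Omega>' (Suc (Suc k0)) \<subseteq> \<Omega>' (Suc k0)" using h' unfolding hier_mesh_def by blast
        moreover have "Q \<subseteq> \<Omega>' (Suc (Suc k0))" using Qc(2) Suc by simp
        ultimately have "Q \<subseteq> \<Omega> (Suc k0)" using A by blast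
        then show ?thesis using Suc by simp
      qed
      then have Qm: "(k,Q) \<in> mesh K0 \<Omega>" using Qc by (simp add: mesh_def)
      define M where "M = {(k,T). (k,T) \<in> mesh K0 \<Omega> \<and> T \<subseteq> \<Omega>' (Suc k)}"
      have MC: "marked_closure p K0 \<Omega> M = M" using closure_eq[OF adm adm' le M_def] .
      have Mm: "M \<subseteq> mesh K0 \<Omega>" unfolding M_def by auto
      define \<Omega>1 where "\<Omega>1 = refine_step p K0 \<Omega> M"
      have step: "refine_rel p K0 \<Omega> \<Omega>1" unfolding refine_rel_def \<Omega>1_def using Mm by blast
      have adm1: "admissible p K0 \<Omega>1" unfolding \<Omega>1_def using refine_adm[OF adm Mm] .
      have le1: "\<forall>k. \<Omega>1 k \<subseteq> \<Omega>' k"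
      proof
        fix k show "\<Omega>1 k \<subseteq> \<Omega>' k"
        proof (cases k)
          case 0 then show ?thesis using le by (simp add: \<Omega>1_def rs0)
        next
          case (Suc l)
          have "\<Omega> (Suc l) \<subseteq> \<Omega>' (Suc l)" using le by blast
          moreover have "\<Union>{T. (l,T) \<in> M} \<subseteq> \<Omega>' (Suc l)" unfolding M_def by blast
          ultimately show ?thesis unfolding \<Omega>1_def Suc rsS MC by blast
        qed
      qed
      have "X \<Omega>1 \<subseteq> X \<Omega>"
      proof
        fix x assume "x \<in> X \<Omega>1"
        then obtain k' Q' where x: "x = (k',Q')" "Q' \<in> cells K0 k'" "Q' \<subseteq> \<Omega>' (Suc k')" "\<not> Q' \<subseteq> \<Omega>1 (Suc k')"
          unfolding X_def by blast
        have "\<Omega> (Suc k') \<subseteq> \<Omega>1 (Suc k')" unfolding \<Omega>1_def by (rule rs_mono)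
        then show "x \<in> X \<Omega>" using x unfolding X_def by blast
      qed
      moreover have "(k,Q) \<notin> X \<Omega>1"
      proof -
        have "(k,Q) \<in> M" using Qm Qc unfolding M_def by simp
        then have "Q \<subseteq> \<Omega>1 (Suc k)" unfolding \<Omega>1_def rsS MC by blast
        then show ?thesis unfolding X_def by blast
      qed
      ultimately have "X \<Omega>1 \<subset> X \<Omega>" using Q by blast
      then have "card (X \<Omega>1) < card (X \<Omega>)" using finX by (intro psubset_card_mono) auto
      then have "(refine_rel p K0)\<^sup>*\<^sup>* \<Omega>1 \<Omega>'" using adm1 le1 by (rule less.hyps)
      then show ?thesis using converse_rtranclp_into_rtranclp[of "refine_rel p K0" \<Omega> \<Omega>1 \<Omega>'] step by blast
    qed
  qed
qed

lemma refinements_adm: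
  assumes "(refine_rel p K0)\<^sup>*\<^sup>* \<Omega> \<Omega>1" "admissible p K0 \<Omega>"
  shows "admissible p K0 \<Omega>1 \<and> (\<forall>k. \<Omega> k \<subseteq> \<Omega>1 k)"
  using assms
proof (induction rule: rtranclp_induct)
  case base then show ?case by simp
next
  case (step y z)
  then obtain M where M: "M \<subseteq> mesh K0 y" "z = refine_step p K0 y M" unfolding refine_rel_def by blast
  then have "admissible p K0 z" using refine_adm step by blast
  moreover have "\<forall>k. y k \<subseteq> z k" using M rs_mono by blast
  ultimately show ?case using step by blast
qed

lemma initial_adm: "admissible p K0 initial_mesh"
proof -
  have h: "hier_mesh K0 initial_mesh" unfolding hier_mesh_def initial_mesh_def by auto
  have "\<forall>kT\<in>mesh K0 initial_mesh. fst kT = 0"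
  proof
    fix kT assume "kT \<in> mesh K0 initial_mesh"
    then obtain k T where "kT = (k,T)" "T \<in> cells K0 k" "T \<subseteq> initial_mesh k" by (auto simp: mesh_def)
    then show "fst kT = 0" using cell_ne by (auto simp: initial_mesh_def split: if_splits)
  qed
  then show ?thesis using h unfolding admissible_def neighbors_def by auto
qed

lemma main1:
  assumes "admissible p K0 \<Omega>"
  shows "refinements p K0 \<Omega> = {\<Omega>'. admissible p K0 \<Omega>' \<and> (\<forall>k. \<Omega> k \<subseteq> \<Omega>' k)}"
  using refinements_adm[OF _ assms] reach[OF _ assms] unfolding refinements_def by blast

end

theorem proposition5p2:
  fixes p :: "'d::finite \<Rightarrow> nat" and K0 :: "'d \<Rightarrow> real list"
  assumes "CARD('d) \<ge> 2"
    and "\<forall>i. 1 \<le> p i"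
    and "\<forall>i. open_knots (p i) (K0 i)"
  shows "(\<forall>\<Omega>. admissible p K0 \<Omega> \<longrightarrow>
            refinements p K0 \<Omega> = {\<Omega>'. admissible p K0 \<Omega>' \<and> (\<forall>k. \<Omega> k \<subseteq> \<Omega>' k)})
       \<and> {\<Omega>. admissible p K0 \<Omega>} = refinements p K0 initial_mesh"
proof -
  interpret hm p K0 using assms(3) by unfold_locales
  have "\<And>\<Omega>. admissible p K0 \<Omega> \<Longrightarrow> \<forall>k. initial_mesh k \<subseteq> \<Omega> k"
    by (auto simp: initial_mesh_def admissible_def hier_mesh_def)
  then have "{\<Omega>. admissible p K0 \<Omega>} = refinements p K0 initial_mesh"
    using main1[OF initial_adm] by auto
  then show ?thesis using main1 by blast
qed


end
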